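(* Let $A,B\in\mathrm{Sym}^{\rm qnd}(\mathbb C^{2d})$ be such that $\mathbb 1+A\theta B\theta$ is invertible (so $A\#B$ is well defined). Then \begin{align*} A\#B&=c\big(c(A\theta)c(B\theta)\big)\theta\\ &=(\mathbb 1+A\theta)^{-1}(A\theta+B\theta)(\mathbb 1+A\theta B\theta)^{-1}(\mathbb 1+A\theta)\theta\\ &=(\mathbb 1+B\theta)(\mathbb 1+A\theta B\theta)^{-1}(A\theta+B\theta)(\mathbb 1+B\theta)^{-1}\theta\\ &=(\mathbb 1-A\theta)(\mathbb 1+B\theta A\theta)^{-1}(A\theta+B\theta)(\mathbb 1-A\theta)^{-1}\theta\\ &=(\mathbb 1-B\theta)^{-1}(A\theta+B\theta)(\mathbb 1+B\theta A\theta)^{-1}(\mathbb 1-B\theta)\theta, \end{align*} (all inverses and Cayley transforms appearing here exist), $c\big((A\#B)\theta\big)=c(A\theta)c(B\theta)$, \[ \mathbb 1+A\theta B\theta=(\mathbb 1+A\theta)\big(\mathbb 1+(A\#B)\theta\big)^{-1}(\mathbb 1+B\theta), \] and $A\#B\in\mathrm{Sym}^{\rm qnd}(\mathbb C^{2d})$.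
   Context: Let $d\ge 1$, let $\mathbb 1$ denote an identity matrix, and let $\theta=\begin{bmatrix}0&-i\mathbb 1_d\\ i\mathbb 1_d&0\end{bmatrix}$ ($2d\times 2d$). $\mathrm{Sym}(\mathbb C^{n})$ denotes the set of complex symmetric $n\times n$ matrices, and $\mathrm{Sym}^{\rm qnd}(\mathbb C^{2d})=\{A\in\mathrm{Sym}(\mathbb C^{2d}):\det(\mathbb 1+A\theta)\neq0\}$. For a square matrix $R$ with $\mathbb 1+R$ invertible, its Cayley transform is $c(R)=(\mathbb 1-R)(\mathbb 1+R)^{-1}$. For $A,B\in\mathrm{Sym}(\mathbb C^{2d})$ such that $M=\begin{bmatrix}\theta A\theta&-\theta\\ \theta&\theta B\theta\end{bmatrix}$ is invertible, $A\#B:=J^TM^{-1}J$ with $J=\begin{bmatrix}-\mathbb 1_{2d}\\ \mathbb 1_{2d}\end{bmatrix}$; $A\#B$ is well defined iff $M$ is invertible, which holds iff $\mathbb 1+A\theta B\theta$ is invertible. *)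

theory Defs
  imports "HOL-Analysis.Analysis"
begin

text \<open>Indices of \<open>\<complex>^{2d}\<close> are \<open>'d + 'd\<close> (first block \<open>Inl\<close>, second block \<open>Inr\<close>),
  where \<open>'d\<close> is a finite type with \<open>CARD('d) = d\<close>.\<close>

definition theta :: "complex ^ ('d::finite + 'd) ^ ('d + 'd)" where
  "theta = (\<chi> i j. case (i, j) of
      (Inl a, Inr b) \<Rightarrow> (if a = b then - \<i> else 0)
    | (Inr a, Inl b) \<Rightarrow> (if a = b then \<i> else 0)
    | _ \<Rightarrow> 0)"

definition Sym :: "complex ^ 'n ^ 'n \<Rightarrow> bool" where
  "Sym A \<longleftrightarrow> transpose A = A"

definition Sym_qnd :: "complex ^ ('d::finite + 'd) ^ ('d + 'd) \<Rightarrow> bool" where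
  "Sym_qnd A \<longleftrightarrow> Sym A \<and> det (mat 1 + A ** theta) \<noteq> 0"

text \<open>Cayley transform (meaningful when \<open>1 + R\<close> is invertible).\<close>
definition cayley :: "complex ^ 'n ^ 'n \<Rightarrow> complex ^ 'n ^ 'n" where
  "cayley R = (mat 1 - R) ** matrix_inv (mat 1 + R)"

definition Jmat :: "complex ^ ('d::finite + 'd) ^ (('d + 'd) + ('d + 'd))" where
  "Jmat = (\<chi> i j. case i of Inl k \<Rightarrow> - (mat 1 $ k $ j) | Inr k \<Rightarrow> mat 1 $ k $ j)"

definition Mmat :: "complex ^ ('d::finite + 'd) ^ ('d + 'd) \<Rightarrow> complex ^ ('d + 'd) ^ ('d + 'd)
    \<Rightarrow> complex ^ (('d + 'd) + ('d + 'd)) ^ (('d + 'd) + ('d + 'd))" where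
  "Mmat A B = (\<chi> i j. case (i, j) of
      (Inl a, Inl b) \<Rightarrow> (theta ** A ** theta) $ a $ b
    | (Inl a, Inr b) \<Rightarrow> - (theta $ a $ b)
    | (Inr a, Inl b) \<Rightarrow> theta $ a $ b
    | (Inr a, Inr b) \<Rightarrow> (theta ** B ** theta) $ a $ b)"

definition sharp :: "complex ^ ('d::finite + 'd) ^ ('d + 'd) \<Rightarrow> complex ^ ('d + 'd) ^ ('d + 'd)
    \<Rightarrow> complex ^ ('d + 'd) ^ ('d + 'd)" (infixl "#\<^sub>s" 70) where
  "A #\<^sub>s B = transpose Jmat ** matrix_inv (Mmat A B) ** Jmat"

end

theory Submission imports Defs begin

typedef 'n sqm = "UNIV :: (complex^'n::finite^'n) set" by auto
setup_lifting type_definition_sqm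

instantiation sqm :: (finite) ring_1
begin
lift_definition zero_sqm :: "'a sqm" is "0" .
lift_definition one_sqm :: "'a sqm" is "mat 1" .
lift_definition plus_sqm :: "'a sqm \<Rightarrow> 'a sqm \<Rightarrow> 'a sqm" is "(+)" .
lift_definition minus_sqm :: "'a sqm \<Rightarrow> 'a sqm \<Rightarrow> 'a sqm" is "(-)" .
lift_definition uminus_sqm :: "'a sqm \<Rightarrow> 'a sqm" is "uminus" .
lift_definition times_sqm :: "'a sqm \<Rightarrow> 'a sqm \<Rightarrow> 'a sqm" is "(**)" .
instance
proof
  fix a b c :: "'a sqm"
  show "a * b * c = a * (b * c)" by transfer (simp add: matrix_mul_assoc)
  show "1 * a = a" by transfer simp
  show "a * 1 = a" by transfer simp
  show "a + b + c = a + (b + c)" by transfer (simp add: add.assoc)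
  show "a + b = b + a" by transfer (simp add: add.commute)
  show "0 + a = a" by transfer simp
  show "- a + a = 0" by transfer simp
  show "a - b = a + - b" by transfer simp
  show "(a + b) * c = a * c + b * c" by transfer (vector matrix_matrix_mult_def sum.distrib[symmetric] distrib_right)
  show "a * (b + c) = a * b + a * c" by transfer (simp add: matrix_add_ldistrib)
  show "(0::'a sqm) \<noteq> 1" by transfer (simp add: vec_eq_iff mat_def)
qed
end


lift_definition minv :: "'n::finite sqm \<Rightarrow> 'n sqm" is matrix_inv .

lemmas rep_eqs = times_sqm.rep_eq plus_sqm.rep_eq minus_sqm.rep_eq uminus_sqm.rep_eq
  one_sqm.rep_eq zero_sqm.rep_eq minv.rep_eq

lemma inv_props:
  fixes X :: "complex^'n::finite^'n"
  assumes "invertible X"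
  shows "X ** matrix_inv X = mat 1 \<and> matrix_inv X ** X = mat 1"
  using assms unfolding invertible_def matrix_inv_def by (rule someI_ex)

lemma minv_mat:
  fixes X Y :: "complex^'n::finite^'n"
  assumes "X ** Y = mat 1"
  shows "matrix_inv X = Y" "Y ** X = mat 1" "invertible X"
proof -
  show YX: "Y ** X = mat 1" using assms matrix_left_right_inverse by blast
  show iX: "invertible X" using assms YX invertible_def by blast
  have "matrix_inv X = matrix_inv X ** (X ** Y)" by (simp add: assms)
  also have "\<dots> = (matrix_inv X ** X) ** Y" by (simp add: matrix_mul_assoc)
  finally show "matrix_inv X = Y" using inv_props[OF iX] by simp
qed

lemma sqm_inv:
  fixes x y :: "'n::finite sqm"
  assumes "x * y = 1"
  shows "minv x = y" "y * x = 1"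
  using assms minv_mat[of "Rep_sqm x" "Rep_sqm y"]
  by (simp_all add: Rep_sqm_inject[symmetric] rep_eqs)

lemma inv_sqm:
  fixes x :: "'n::finite sqm"
  shows "invertible (Rep_sqm x) \<longleftrightarrow> x * minv x = 1 \<and> minv x * x = 1"
proof
  assume "invertible (Rep_sqm x)"
  from inv_props[OF this] show "x * minv x = 1 \<and> minv x * x = 1"
    by (simp add: Rep_sqm_inject[symmetric] rep_eqs)
next
  assume "x * minv x = 1 \<and> minv x * x = 1"
  then show "invertible (Rep_sqm x)" unfolding invertible_def
    by (metis Rep_sqm_inject rep_eqs(1,5))
qed

lemma sum_Plus_UNIV:
  "sum f (UNIV :: ('a::finite + 'b::finite) set) = sum (\<lambda>x. f (Inl x)) UNIV + sum (\<lambda>x. f (Inr x)) UNIV"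
  by (subst UNIV_Plus_UNIV[symmetric], subst sum.Plus) (auto simp: o_def)

definition blkS :: "'n::finite sqm \<Rightarrow> 'n sqm \<Rightarrow> 'n sqm \<Rightarrow> 'n sqm \<Rightarrow> complex^('n+'n)^('n+'n)" where
  "blkS P Q R S = (\<chi> i j. case i of
     Inl x \<Rightarrow> (case j of Inl y \<Rightarrow> Rep_sqm P$x$y | Inr y \<Rightarrow> Rep_sqm Q$x$y)
   | Inr x \<Rightarrow> (case j of Inl y \<Rightarrow> Rep_sqm R$x$y | Inr y \<Rightarrow> Rep_sqm S$x$y))"

lemma blkS_mult:
  "blkS P Q R S ** blkS P' Q' R' S' = blkS (P*P'+Q*R') (P*Q'+Q*S') (R*P'+S*R') (R*Q'+S*S')"
  unfolding blkS_def
  by (auto simp: vec_eq_iff matrix_matrix_mult_def sum_Plus_UNIV rep_eqs split: sum.split)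



lemma blkS_one: "blkS 1 0 0 1 = mat 1"
  unfolding blkS_def
  by (auto simp: vec_eq_iff mat_def rep_eqs split: sum.split)



lemma Mmat_blk:
  "Mmat A B = blkS (Abs_sqm (theta**A**theta)) (Abs_sqm (-theta)) (Abs_sqm theta) (Abs_sqm (theta**B**theta))"
  unfolding blkS_def Mmat_def
  by (auto simp: vec_eq_iff Abs_sqm_inverse split: sum.split)



lemma theta_sq: "theta ** theta = mat 1"
proof -
  have "(theta ** theta) $ i $ j = mat 1 $ i $ j" for i j
    by (cases i; cases j) (simp_all add: matrix_matrix_mult_def sum_Plus_UNIV theta_def mat_def if_distrib if_distribR cong: if_cong)
  then show ?thesis unfolding vec_eq_iff by blast
qed
lemma sum_Plus2:
  "sum f (UNIV :: (('a::finite + 'a) + ('a + 'a)) set) = sum (\<lambda>x. f (Inl x)) UNIV + sum (\<lambda>x. f (Inr x)) UNIV"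
  by (rule sum_Plus_UNIV)
definition stkS :: "'n::finite sqm \<Rightarrow> 'n sqm \<Rightarrow> complex^'n^('n+'n)" where
  "stkS U V = (\<chi> i j. case i of Inl k \<Rightarrow> Rep_sqm U$k$j | Inr k \<Rightarrow> Rep_sqm V$k$j)"
lemma blkS_J: "blkS P Q R S ** Jmat = stkS (Q - P) (S - R)"
proof -
  have "(blkS P Q R S ** Jmat) $ i $ j = stkS (Q - P) (S - R) $ i $ j" for i j
    by (cases i) (simp_all add: matrix_matrix_mult_def sum_Plus2 blkS_def Jmat_def stkS_def rep_eqs mat_def if_distrib if_distribR cong: if_cong)
  then show ?thesis unfolding vec_eq_iff by blast
qed
lemma J_stkS: "transpose Jmat ** stkS U V = Rep_sqm (V - U)"
proof -
  have "(transpose Jmat ** stkS U V) $ i $ j = Rep_sqm (V - U) $ i $ j" for i j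
    by (simp add: matrix_matrix_mult_def sum_Plus2 transpose_def Jmat_def stkS_def rep_eqs mat_def if_distrib if_distribR cong: if_cong)
  then show ?thesis unfolding vec_eq_iff by blast
qed
lemma J_blk: "transpose Jmat ** blkS P Q R S ** Jmat = Rep_sqm (P - Q - R + S)"
  by (simp add: matrix_mul_assoc[symmetric] blkS_J J_stkS algebra_simps)


lemma theta_tr: "transpose theta = - theta"
  unfolding theta_def
  by (auto simp: vec_eq_iff transpose_def split: sum.split)



lemma mat_comm: "(mat c :: complex^'n::finite^'n) ** X = X ** mat c"
  by (simp add: vec_eq_iff matrix_matrix_mult_def mat_def if_distrib if_distribR mult.commute cong: if_cong)



lemma neg_mul: "(- X) ** (Y::complex^'n::finite^'n) = - (X ** Y)"
  by (simp add: vec_eq_iff matrix_matrix_mult_def sum_negf)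
lemma mul_neg: "X ** (- Y) = - (X ** (Y::complex^'n::finite^'n))"
  by (simp add: vec_eq_iff matrix_matrix_mult_def sum_negf)
lemma tr_diff: "transpose (X - Y) = transpose X - transpose (Y::complex^'n::finite^'n)"
  by (simp add: vec_eq_iff transpose_def)
lemma inv_tr_iff: "invertible (transpose X) \<longleftrightarrow> invertible (X::complex^'n::finite^'n)"
  by (simp add: invertible_det_nz)
lemma inv_tr: "invertible (X::complex^'n::finite^'n) \<Longrightarrow> matrix_inv (transpose X) = transpose (matrix_inv X)"
  by (rule minv_mat(1)) (simp add: inv_props flip: matrix_transpose_mul)
lemma tr_thAth: "Sym A \<Longrightarrow> transpose (theta ** A ** theta) = theta ** A ** theta"
  by (simp add: Sym_def matrix_transpose_mul theta_tr neg_mul mul_neg matrix_mul_assoc)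
lemma Mmat_tr: "Sym A \<Longrightarrow> Sym B \<Longrightarrow> transpose (Mmat A B) = Mmat A B"
proof -
  assume a: "Sym A" and b: "Sym B"
  have ta: "(theta ** A ** theta) $ y $ x = (theta ** A ** theta) $ x $ y" for x y
  proof -
    have "transpose (theta ** A ** theta) $ x $ y = (theta ** A ** theta) $ x $ y" by (simp add: tr_thAth a)
    then show ?thesis by (simp add: transpose_def)
  qed
  have tb: "(theta ** B ** theta) $ y $ x = (theta ** B ** theta) $ x $ y" for x y
  proof -
    have "transpose (theta ** B ** theta) $ x $ y = (theta ** B ** theta) $ x $ y" by (simp add: tr_thAth b)
    then show ?thesis by (simp add: transpose_def)
  qed
  have tt: "theta $ y $ x = - theta $ x $ y" for x y
    by (cases x; cases y) (simp_all add: theta_def)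
  have "transpose (Mmat A B) $ i $ j = Mmat A B $ i $ j" for i j
  proof (cases i; cases j)
    fix p q assume "i = Inl p" "j = Inl q" then show ?thesis by (simp add: transpose_def Mmat_def ta)
  next
    fix p q assume "i = Inl p" "j = Inr q" then show ?thesis by (simp add: transpose_def Mmat_def tt[of q p])
  next
    fix p q assume "i = Inr p" "j = Inl q" then show ?thesis by (simp add: transpose_def Mmat_def tt[of q p])
  next
    fix p q assume "i = Inr p" "j = Inr q" then show ?thesis by (simp add: transpose_def Mmat_def tb)
  qed
  then show ?thesis unfolding vec_eq_iff by blast
qed

lemma revs: "Rep_sqm x ** Rep_sqm y = Rep_sqm (x*y)" "Rep_sqm x + Rep_sqm y = Rep_sqm (x+y)"
  "Rep_sqm x - Rep_sqm y = Rep_sqm (x-y)" "- Rep_sqm x = Rep_sqm (-x)" "mat 1 = Rep_sqm 1"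
  "matrix_inv (Rep_sqm x) = Rep_sqm (minv x)"
  by (simp_all add: rep_eqs)

lemma core:
  fixes A B t pi qi pmi qmi ri h a b r' Z zi X xi :: "'r::ring_1"
  assumes a_def: "a = A*t" and b_def: "b = B*t"
  and r'_def: "r' = 1 - b*ri*a"
  and Z_def: "Z = ((1-a)*pi)*((1-b)*qi)"
  and zi_def: "zi = h*((1+b)*ri*(1+a))"
  and X_def: "X = r'*b - r' - (a*r'*b - 1) + a*r'"
  and xi_def: "xi = (1+Z)*h"
  and tt: "t*t = 1"
    and pi1: "pi*(1+a) = 1" and pi2: "(1+a)*pi = 1"
    and qi1: "qi*(1+b) = 1" and qi2: "(1+b)*qi = 1"
    and pmi1: "pmi*(1-a) = 1" and pmi2: "(1-a)*pmi = 1"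
    and qmi1: "qmi*(1-b) = 1" and qmi2: "(1-b)*qmi = 1"
    and ri1: "ri*(1+a*b) = 1" and ri2: "(1+a*b)*ri = 1"
    and hh: "h + h = 1" and hc: "\<And>x. h*x = x*h"
  shows "(1+b*a)*r' = 1" and "r'*(1+b*a) = 1"
    and "(1+Z)*zi = 1" and "zi*(1+Z) = 1"
    and "(1+X)*xi = 1" and "xi*(1+X) = 1"
    and "X = (1-Z)*zi"
    and "X = pi*(a+b)*ri*(1+a)"
    and "X = (1+b)*ri*(a+b)*qi"
    and "X = (1-a)*r'*(a+b)*pmi"
    and "X = qmi*(a+b)*r'*(1-b)"
    and "(1-X)*xi = Z"
    and "1 + a*b = (1+a)*xi*(1+b)"
    and "(t*A*t)*(r'*b*t) + (-t)*((a*r'*b - 1)*t) = 1"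
    and "(t*A*t)*(r'*t) + (-t)*(a*r'*t) = 0"
    and "t*(r'*b*t) + (t*B*t)*((a*r'*b - 1)*t) = 0"
    and "t*(r'*t) + (t*B*t)*(a*r'*t) = 1"
    and "r'*b*t - r'*t - (a*r'*b - 1)*t + a*r'*t = X*t"
proof -
  have tt': "\<And>x. t*(t*x) = x" using tt by (metis mult.assoc mult_1_left)
  have r1: "(1+b*a)*r' = 1"
  proof -
    have "(1+b*a)*r' = 1 + b*a - b*((1+a*b)*ri)*a" by (simp add: r'_def algebra_simps)
    then show ?thesis by (simp add: ri2)
  qed
  have r2: "r'*(1+b*a) = 1"
  proof -
    have "r'*(1+b*a) = 1 + b*a - b*(ri*(1+a*b))*a" by (simp add: r'_def algebra_simps)
    then show ?thesis by (simp add: ri1)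
  qed
  have rb: "r'*b = b*ri"
  proof -
    have "b*ri = b*(ri*(1+a*b)) - b*ri*a*b" by (simp add: algebra_simps)
    also have "\<dots> = r'*b" by (simp only: ri1 mult_1_right) (simp add: r'_def algebra_simps)
    finally show ?thesis by simp
  qed
  have ar: "a*r' = ri*a"
  proof -
    have "ri*a = ((1+a*b)*ri)*a - a*b*ri*a" by (simp add: algebra_simps)
    also have "\<dots> = a*r'" by (simp only: ri2 mult_1_left) (simp add: r'_def algebra_simps)
    finally show ?thesis by simp
  qed
  have bra: "b*ri*a = 1 - r'" by (simp add: r'_def)
  have arb: "a*r'*b = 1 - ri"
  proof -
    have "a*r'*b = a*(r'*b)" by (simp add: mult.assoc)
    also have "\<dots> = ((1+a*b)*ri) - ri" by (simp add: rb algebra_simps)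
    finally show ?thesis by (simp add: ri2)
  qed
  have K: "(1+b)*ri*(1+a) + (1-a)*r'*(1-b) = 1+1"
  proof -
    have "(1+b)*ri*(1+a) + (1-a)*r'*(1-b) = ri + r' + (b*ri - r'*b) + (ri*a - a*r') + b*ri*a + a*r'*b"
      by (simp add: algebra_simps)
    also have "\<dots> = 1 + 1" by (subst arb, subst bra, simp add: rb ar algebra_simps)
    finally show ?thesis .
  qed
  have X1: "X = 1 - (1-a)*r'*(1-b)" by (simp add: X_def algebra_simps)
  have K': "(1-a)*r'*(1-b) = (1+1) - (1+b)*ri*(1+a)" by (metis K add_diff_cancel_left')
  have X2: "X = (1+b)*ri*(1+a) - 1" by (simp add: X1 K')
  have f8: "X = qmi*(a+b)*r'*(1-b)"
  proof -
    have "(1-b)*X = (1-b) - ((1+b*a)*r')*(1-b) + (a+b)*r'*(1-b)" by (simp add: X1 algebra_simps)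
    then have e: "(1-b)*X = (a+b)*r'*(1-b)" by (simp add: r1)
    have "X = (qmi*(1-b))*X" by (simp add: qmi1)
    also have "\<dots> = qmi*((1-b)*X)" by (simp add: mult.assoc)
    finally show ?thesis by (simp add: e mult.assoc)
  qed
  have f7: "X = (1-a)*r'*(a+b)*pmi"
  proof -
    have "X*(1-a) = (1-a) - (1-a)*(r'*(1+b*a)) + (1-a)*r'*(a+b)" by (simp add: X1 algebra_simps)
    then have e: "X*(1-a) = (1-a)*r'*(a+b)" by (simp add: r2)
    have "X = X*((1-a)*pmi)" by (simp add: pmi2)
    also have "\<dots> = (X*(1-a))*pmi" by (simp add: mult.assoc)
    finally show ?thesis by (simp add: e)
  qed
  have f2: "X = pi*(a+b)*ri*(1+a)"
  proof -
    have "(1+a)*X = ((1+a*b)*ri)*(1+a) + (a+b)*ri*(1+a) - (1+a)" by (simp add: X2 algebra_simps)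
    then have e: "(1+a)*X = (a+b)*ri*(1+a)" by (simp add: ri2)
    have "X = (pi*(1+a))*X" by (simp add: pi1)
    also have "\<dots> = pi*((1+a)*X)" by (simp add: mult.assoc)
    finally show ?thesis by (simp add: e mult.assoc)
  qed
  have f6: "X = (1+b)*ri*(a+b)*qi"
  proof -
    have "X*(1+b) = (1+b)*(ri*(1+a*b)) + (1+b)*ri*(a+b) - (1+b)" by (simp add: X2 algebra_simps)
    then have e: "X*(1+b) = (1+b)*ri*(a+b)" by (simp add: ri1)
    have "X = X*((1+b)*qi)" by (simp add: qi2)
    also have "\<dots> = (X*(1+b))*qi" by (simp add: mult.assoc)
    finally show ?thesis by (simp add: e)
  qed
  have pc: "pi*(1-a) = (1-a)*pi"
  proof -
    have "pi*(1-a) = pi*(1-a)*((1+a)*pi)" by (simp add: pi2)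
    also have "\<dots> = pi*((1-a)*(1+a))*pi" by (simp add: mult.assoc)
    also have "(1-a)*(1+a) = (1+a)*(1-a)" by (simp add: algebra_simps)
    also have "pi*((1+a)*(1-a))*pi = (pi*(1+a))*(1-a)*pi" by (simp add: mult.assoc)
    finally show ?thesis by (simp add: pi1)
  qed
  define y where "y = pi*(1+a*b)*qi"
  define y2 where "y2 = pi*(a+b)*qi"
  define w where "w = (1+b)*ri*(1+a)"
  have Zf: "Z = pi*(1-a)*(1-b)*qi" by (simp add: Z_def pc mult.assoc)
  have e1: "pi*(1+a)*(1+b)*qi = 1" by (simp add: pi1 qi2)
  have Zy: "1 + Z = y + y"
  proof -
    have "1 + Z = pi*(1+a)*(1+b)*qi + pi*(1-a)*(1-b)*qi" by (simp add: e1 Zf)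
    also have "\<dots> = y + y" by (simp add: y_def algebra_simps)
    finally show ?thesis .
  qed
  have Zy2: "1 - Z = y2 + y2"
  proof -
    have "1 - Z = pi*(1+a)*(1+b)*qi - pi*(1-a)*(1-b)*qi" by (simp add: e1 Zf)
    also have "\<dots> = y2 + y2" by (simp add: y2_def algebra_simps)
    finally show ?thesis .
  qed
  have yw: "y*w = 1"
  proof -
    have "y*w = pi*((1+a*b)*(qi*(1+b))*ri)*(1+a)" by (simp add: y_def w_def mult.assoc)
    also have "\<dots> = pi*(1+a)" by (simp add: qi1 ri2)
    finally show ?thesis by (simp add: pi1)
  qed
  have wy: "w*y = 1"
  proof -
    have "w*y = (1+b)*(ri*((1+a)*pi)*(1+a*b))*qi" by (simp add: y_def w_def mult.assoc)
    also have "\<dots> = (1+b)*qi" by (simp add: pi2 ri1)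
    finally show ?thesis by (simp add: qi2)
  qed
  have y2w: "y2*w = X"
  proof -
    have "y2*w = pi*(a+b)*(qi*(1+b))*ri*(1+a)" by (simp add: y2_def w_def mult.assoc)
    also have "\<dots> = X" by (simp add: qi1 f2)
    finally show ?thesis .
  qed
  have hsplit: "\<And>u zz. (u+u)*(h*zz) = u*zz"
  proof -
    fix u zz
    have "(u+u)*(h*zz) = (u*h + u*h)*zz" by (simp add: algebra_simps)
    also have "\<dots> = (h+h)*u*zz" by (simp add: hc algebra_simps)
    finally show "(u+u)*(h*zz) = u*zz" by (simp add: hh)
  qed
  have hsplit2: "\<And>u. (u+u)*h = u"
    using hsplit[of _ 1] by simp
  have Xw: "1 + X = w" by (simp add: X2 w_def)
  have xiy: "xi = y" by (simp add: xi_def Zy hsplit2)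
  show "(1+b*a)*r' = 1" by (rule r1)
  show "r'*(1+b*a) = 1" by (rule r2)
  show "(1+Z)*zi = 1" by (simp add: Zy zi_def hsplit yw flip: w_def)
  show "zi*(1+Z) = 1"
  proof -
    have "zi*(1+Z) = h*(w*y + w*y)" by (simp add: Zy zi_def w_def mult.assoc flip: distrib_left)
    also have "\<dots> = h + h" by (simp only: wy distrib_left mult_1_right)
    finally show ?thesis by (simp add: hh)
  qed
  show "(1+X)*xi = 1" by (simp add: Xw xiy wy)
  show "xi*(1+X) = 1" by (simp add: Xw xiy yw)
  show "X = (1-Z)*zi" by (simp add: Zy2 zi_def hsplit y2w flip: w_def)
  show "X = pi*(a+b)*ri*(1+a)" by (rule f2)
  show "X = (1+b)*ri*(a+b)*qi" by (rule f6)
  show "X = (1-a)*r'*(a+b)*pmi" by (rule f7)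
  show "X = qmi*(a+b)*r'*(1-b)" by (rule f8)
  show "(1-X)*xi = Z"
  proof -
    have "(1-X)*xi = ((1+Z)+(1+Z))*h - (1+X)*xi" by (simp add: xi_def algebra_simps)
    also have "(1+X)*xi = 1" by (simp add: Xw xiy wy)
    finally show ?thesis by (simp add: hsplit2)
  qed
  show "1 + a*b = (1+a)*xi*(1+b)"
  proof -
    have "(1+a)*xi*(1+b) = ((1+a)*pi)*(1+a*b)*(qi*(1+b))" by (simp add: xiy y_def mult.assoc)
    then show ?thesis by (simp add: pi2 qi1)
  qed
  have tA: "\<And>x. t*(A*(t*x)) = t*(a*x)" by (simp add: a_def mult.assoc)
  have tB: "\<And>x. t*(B*(t*x)) = t*(b*x)" by (simp add: b_def mult.assoc)
  show "(t*A*t)*(r'*b*t) + (-t)*((a*r'*b - 1)*t) = 1"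
    by (simp add: tA algebra_simps tt tt')
  show "(t*A*t)*(r'*t) + (-t)*(a*r'*t) = 0"
    by (simp add: tA algebra_simps)
  show "t*(r'*b*t) + (t*B*t)*((a*r'*b - 1)*t) = 0"
  proof -
    have "t*(r'*b*t) + (t*B*t)*((a*r'*b - 1)*t) = t*(((1+b*a)*r')*b - b)*t"
      by (simp add: tB algebra_simps)
    then show ?thesis by (simp add: r1)
  qed
  show "t*(r'*t) + (t*B*t)*(a*r'*t) = 1"
  proof -
    have "t*(r'*t) + (t*B*t)*(a*r'*t) = t*((1+b*a)*r')*t"
      by (simp add: tB algebra_simps)
    then show ?thesis by (simp add: r1 tt)
  qed
  show "r'*b*t - r'*t - (a*r'*b - 1)*t + a*r'*t = X*t"
    by (simp add: X_def algebra_simps)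
qed



lemma inv_from: "x*y = 1 \<Longrightarrow> invertible (Rep_sqm (x::'n::finite sqm))"
  using sqm_inv inv_sqm by metis

theorem mainTheorem3:
  fixes A B :: "complex ^ ('d::finite + 'd) ^ ('d + 'd)"
  assumes hA: "Sym_qnd A" and hB: "Sym_qnd B"
    and hAB: "invertible (mat 1 + A ** theta ** B ** theta)"
  shows "invertible (Mmat A B)
    \<and> invertible (mat 1 + A ** theta) \<and> invertible (mat 1 + B ** theta)
    \<and> invertible (mat 1 - A ** theta) \<and> invertible (mat 1 - B ** theta)
    \<and> invertible (mat 1 + B ** theta ** A ** theta)
    \<and> invertible (mat 1 + cayley (A ** theta) ** cayley (B ** theta))
    \<and> invertible (mat 1 + (A #\<^sub>s B) ** theta)
    \<and> A #\<^sub>s B = cayley (cayley (A ** theta) ** cayley (B ** theta)) ** theta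
    \<and> A #\<^sub>s B = matrix_inv (mat 1 + A ** theta) ** (A ** theta + B ** theta)
                 ** matrix_inv (mat 1 + A ** theta ** B ** theta) ** (mat 1 + A ** theta) ** theta
    \<and> A #\<^sub>s B = (mat 1 + B ** theta) ** matrix_inv (mat 1 + A ** theta ** B ** theta)
                 ** (A ** theta + B ** theta) ** matrix_inv (mat 1 + B ** theta) ** theta
    \<and> A #\<^sub>s B = (mat 1 - A ** theta) ** matrix_inv (mat 1 + B ** theta ** A ** theta)
                 ** (A ** theta + B ** theta) ** matrix_inv (mat 1 - A ** theta) ** theta
    \<and> A #\<^sub>s B = matrix_inv (mat 1 - B ** theta) ** (A ** theta + B ** theta)
                 ** matrix_inv (mat 1 + B ** theta ** A ** theta) ** (mat 1 - B ** theta) ** theta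
    \<and> cayley ((A #\<^sub>s B) ** theta) = cayley (A ** theta) ** cayley (B ** theta)
    \<and> mat 1 + A ** theta ** B ** theta
        = (mat 1 + A ** theta) ** matrix_inv (mat 1 + (A #\<^sub>s B) ** theta) ** (mat 1 + B ** theta)
    \<and> Sym_qnd (A #\<^sub>s B)"
  proof -
  define A' where "A' = Abs_sqm A"
  define B' where "B' = Abs_sqm B"
  define T where "T = Abs_sqm (theta :: complex ^ ('d + 'd) ^ ('d + 'd))"
  have eA: "A = Rep_sqm A'" by (simp add: A'_def Abs_sqm_inverse)
  have eB: "B = Rep_sqm B'" by (simp add: B'_def Abs_sqm_inverse)
  have eT: "theta = Rep_sqm T" by (simp add: T_def Abs_sqm_inverse)
  have sA: "Sym A" and sB: "Sym B" using hA hB by (simp_all add: Sym_qnd_def)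
  have th2: "theta ** theta = (mat 1 :: complex^('d+'d)^('d+'d))" by (rule theta_sq)
  have tt: "T*T = 1" using th2 unfolding eT by (simp add: revs Rep_sqm_inject)
  have tt': "\<And>x. T*(T*x) = x" using tt by (metis mult.assoc mult_1_left)
  have i1: "invertible (Rep_sqm (1 + A'*T))"
    using hA by (simp add: Sym_qnd_def invertible_det_nz eA eT revs)
  have i2: "invertible (Rep_sqm (1 + B'*T))"
    using hB by (simp add: Sym_qnd_def invertible_det_nz eA eB eT revs)
  have i3: "invertible (Rep_sqm (1 + A'*T*(B'*T)))"
    using hAB by (simp add: eA eB eT revs mult.assoc)
  have iA: "(1 + A'*T) * minv (1 + A'*T) = 1 \<and> minv (1 + A'*T) * (1 + A'*T) = 1"
    using i1 inv_sqm by blast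
  have iB: "(1 + B'*T) * minv (1 + B'*T) = 1 \<and> minv (1 + B'*T) * (1 + B'*T) = 1"
    using i2 inv_sqm by blast
  have iAB: "(1 + A'*T*(B'*T)) * minv (1 + A'*T*(B'*T)) = 1 \<and> minv (1 + A'*T*(B'*T)) * (1 + A'*T*(B'*T)) = 1"
    using i3 inv_sqm by blast
  have trm: "\<And>C' :: ('d+'d) sqm. Sym (Rep_sqm C') \<Longrightarrow> transpose (Rep_sqm (1 - C'*T)) = Rep_sqm (1 - (-T)*C')"
    by (simp add: rep_eqs tr_diff matrix_transpose_mul Sym_def theta_tr neg_mul flip: eT)
  have rr: "\<And>C' :: ('d+'d) sqm. T*(1+C'*T)*T = 1 - (-T)*C'"
    by (simp add: algebra_simps tt tt')
  have im: "\<And>C' :: ('d+'d) sqm. Sym (Rep_sqm C') \<Longrightarrow> invertible (Rep_sqm (1 + C'*T)) \<Longrightarrow> invertible (Rep_sqm (1 - C'*T))"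
  proof -
    fix C' :: "('d+'d) sqm" assume sc: "Sym (Rep_sqm C')" and ic: "invertible (Rep_sqm (1 + C'*T))"
    have "(T*(1+C'*T)*T) * (T*minv (1+C'*T)*T) = 1"
    proof -
      have "(T*(1+C'*T)*T) * (T*minv (1+C'*T)*T) = T*((1+C'*T)*minv (1+C'*T))*T"
        by (simp add: mult.assoc tt')
      then show ?thesis using ic tt by (simp add: inv_sqm)
    qed
    then have "invertible (Rep_sqm (T*(1+C'*T)*T))" by (rule inv_from)
    then have "invertible (transpose (Rep_sqm (1 - C'*T)))" by (simp add: trm[OF sc] rr)
    then show "invertible (Rep_sqm (1 - C'*T))" by (simp add: inv_tr_iff)
  qed
  have i4: "invertible (Rep_sqm (1 - A'*T))" using im i1 sA eA by blast
  have i5: "invertible (Rep_sqm (1 - B'*T))" using im i2 sB eB by blast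
  have iAm: "(1 - A'*T) * minv (1 - A'*T) = 1 \<and> minv (1 - A'*T) * (1 - A'*T) = 1"
    using i4 inv_sqm by blast
  have iBm: "(1 - B'*T) * minv (1 - B'*T) = 1 \<and> minv (1 - B'*T) * (1 - B'*T) = 1"
    using i5 inv_sqm by blast
  define h :: "('d+'d) sqm" where "h = Abs_sqm (mat (1/2))"
  have hh: "h + h = 1" by (simp add: h_def Rep_sqm_inject[symmetric] rep_eqs Abs_sqm_inverse vec_eq_iff mat_def)
  have hc: "\<And>x. h*x = x*h" by (simp add: h_def Rep_sqm_inject[symmetric] rep_eqs Abs_sqm_inverse mat_comm)
  define a where "a = A'*T"
  define b where "b = B'*T"
  define pi where "pi = minv (1 + a)"
  define qi where "qi = minv (1 + b)"
  define pmi where "pmi = minv (1 - a)"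
  define qmi where "qmi = minv (1 - b)"
  define ri where "ri = minv (1 + a*b)"
  define r' where "r' = 1 - b*ri*a"
  define Z where "Z = ((1-a)*pi)*((1-b)*qi)"
  define zi where "zi = h*((1+b)*ri*(1+a))"
  define X where "X = r'*b - r' - (a*r'*b - 1) + a*r'"
  define xi where "xi = (1+Z)*h"
  note C = core[OF a_def b_def r'_def Z_def zi_def X_def xi_def tt,
     unfolded pi_def qi_def pmi_def qmi_def ri_def a_def b_def,
     OF iA[THEN conjunct2] iA[THEN conjunct1] iB[THEN conjunct2] iB[THEN conjunct1]
        iAm[THEN conjunct2] iAm[THEN conjunct1] iBm[THEN conjunct2] iBm[THEN conjunct1]
        iAB[THEN conjunct2] iAB[THEN conjunct1] hh hc]
  have rinv: "minv (1 + B'*T*(A'*T)) = r'" "invertible (Rep_sqm (1 + B'*T*(A'*T)))"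
    using sqm_inv[OF C(1)] inv_from[OF C(1)] by auto
  have zinv: "minv (1 + Z) = zi" "invertible (Rep_sqm (1 + Z))"
    using sqm_inv[OF C(3)] inv_from[OF C(3)] by auto
  have xinv: "minv (1 + X) = xi" "invertible (Rep_sqm (1 + X))"
    using sqm_inv[OF C(5)] inv_from[OF C(5)] by auto
  have M: "Mmat A B = blkS (T*A'*T) (-T) T (T*B'*T)"
    by (simp add: Mmat_blk eA eB eT revs Rep_sqm_inverse)
  define W where "W = blkS (r'*(B'*T)*T) (r'*T) ((A'*T*r'*(B'*T) - 1)*T) (A'*T*r'*T)"
  have MW: "Mmat A B ** W = mat 1"
    unfolding M W_def blkS_mult C(14-17) blkS_one ..
  have Minv: "matrix_inv (Mmat A B) = W" "invertible (Mmat A B)"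
    using minv_mat[OF MW] by auto
  have sh: "A #\<^sub>s B = Rep_sqm (X*T)"
    unfolding sharp_def Minv W_def J_blk C(18) by (rule refl)
  have shsym: "Sym (A #\<^sub>s B)"
    unfolding Sym_def sharp_def
    by (simp add: matrix_transpose_mul matrix_mul_assoc inv_tr[OF Minv(2), symmetric] Mmat_tr sA sB)
  have XTT: "X*T*T = X" by (simp add: mult.assoc tt)
  have shq: "Sym_qnd (A #\<^sub>s B)"
    unfolding Sym_qnd_def using shsym xinv(2)
    by (simp add: sh eT revs XTT invertible_det_nz)
  have fZ: "(1 - A'*T)*(minv(1+A'*T)*((1-B'*T)*minv(1+B'*T))) = Z"
    by (simp add: Z_def pi_def qi_def a_def b_def mult.assoc)
  have fr: "minv (1 + B'*(T*(A'*T))) = r'" using rinv(1) by (simp add: mult.assoc)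
  note FS = i1 i2 i3[simplified mult.assoc] i4 i5 rinv(2)[simplified mult.assoc] zinv(2) xinv(2)
     C(7-11)[THEN arg_cong[where f="\<lambda>x. x*T"], simplified mult.assoc] C(12) C(13)[simplified mult.assoc]
  show ?thesis
    using Minv(2) shq unfolding sh
    by (simp only: eA eB eT cayley_def revs Rep_sqm_inject mult.assoc tt mult_1_right fZ fr zinv(1) xinv(1))
      (intro conjI TrueI; rule FS)
qed
end
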